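(* Let $\mathcal{H}$ and $\mathcal{K}$ be finite-dimensional complex Hilbert spaces and let $\Psi: B(\mathcal{H})\to B(\mathcal{K})$ be a Hermitian-preserving trace-preserving linear map. Then the following are equivalent: (1) $\Psi$ is semi-nonnegative; (2) there exist CPTP maps $\Phi: B(\mathcal{H})\to B(\mathcal{H})$ and $\Xi: B(\mathcal{H})\to B(\mathcal{K})$ such that $\Psi\circ\Phi=\Xi$.
   Context: $B(\mathcal{H})$ denotes the space of all linear operators on $\mathcal{H}$. A density matrix is a positive semidefinite operator of trace one. A linear map $\Psi$ is Hermitian-preserving if $\Psi(X^\dagger)=\Psi(X)^\dagger$ for all $X$ and trace-preserving if $\operatorname{Tr}\Psi(X)=\operatorname{Tr}X$. A Hermitian-preserving trace-preserving map $\Psi: B(\mathcal{H})\to B(\mathcal{K})$ is semi-nonnegative (SN) if there exists a density matrix $\rho\in B(\mathcal{H})$ such that $\Psi(\rho)$ is a density matrix. *)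

theory Defs
  imports "Jordan_Normal_Form.Matrix"
begin

text \<open>B(H) with dim H = n is modelled as the complex n x n matrices (carrier_mat n n).\<close>

definition mtrace :: "complex mat \<Rightarrow> complex" where
  "mtrace A = (\<Sum>i<dim_row A. A $$ (i, i))"

definition madj :: "complex mat \<Rightarrow> complex mat" where
  "madj A = mat (dim_col A) (dim_row A) (\<lambda>(i, j). cnj (A $$ (j, i)))"

definition lin_map :: "nat \<Rightarrow> nat \<Rightarrow> (complex mat \<Rightarrow> complex mat) \<Rightarrow> bool" where
  "lin_map n m \<Psi> \<longleftrightarrow>
     (\<forall>A \<in> carrier_mat n n. \<Psi> A \<in> carrier_mat m m) \<and>
     (\<forall>A \<in> carrier_mat n n. \<forall>B \<in> carrier_mat n n. \<Psi> (A + B) = \<Psi> A + \<Psi> B) \<and>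
     (\<forall>A \<in> carrier_mat n n. \<forall>c. \<Psi> (c \<cdot>\<^sub>m A) = c \<cdot>\<^sub>m \<Psi> A)"

definition herm_preserving :: "nat \<Rightarrow> (complex mat \<Rightarrow> complex mat) \<Rightarrow> bool" where
  "herm_preserving n \<Psi> \<longleftrightarrow> (\<forall>X \<in> carrier_mat n n. \<Psi> (madj X) = madj (\<Psi> X))"

definition trace_preserving :: "nat \<Rightarrow> (complex mat \<Rightarrow> complex mat) \<Rightarrow> bool" where
  "trace_preserving n \<Psi> \<longleftrightarrow> (\<forall>X \<in> carrier_mat n n. mtrace (\<Psi> X) = mtrace X)"

definition psd :: "nat \<Rightarrow> complex mat \<Rightarrow> bool" where
  "psd d A \<longleftrightarrow> A \<in> carrier_mat d d \<and> madj A = A \<and>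
     (\<forall>v \<in> carrier_vec d. (conjugate v \<bullet> (A *\<^sub>v v)) \<in> \<real> \<and> Re (conjugate v \<bullet> (A *\<^sub>v v)) \<ge> 0)"

definition density :: "nat \<Rightarrow> complex mat \<Rightarrow> bool" where
  "density d \<rho> \<longleftrightarrow> psd d \<rho> \<and> mtrace \<rho> = 1"

text \<open>Ampliation id_k \<otimes> \<Psi> on B(C^k \<otimes> C^n), with basis e_i \<otimes> e_a indexed by i*n + a:
  the (i,j) block of the output is \<Psi> applied to the (i,j) block of the input.\<close>
definition ampl :: "nat \<Rightarrow> nat \<Rightarrow> nat \<Rightarrow> (complex mat \<Rightarrow> complex mat) \<Rightarrow> complex mat \<Rightarrow> complex mat" where
  "ampl k n m \<Psi> X = mat (k * m) (k * m) (\<lambda>(p, q).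
      \<Psi> (mat n n (\<lambda>(a, b). X $$ ((p div m) * n + a, (q div m) * n + b))) $$ (p mod m, q mod m))"

definition completely_positive :: "nat \<Rightarrow> nat \<Rightarrow> (complex mat \<Rightarrow> complex mat) \<Rightarrow> bool" where
  "completely_positive n m \<Phi> \<longleftrightarrow>
     (\<forall>k. \<forall>X. psd (k * n) X \<longrightarrow> psd (k * m) (ampl k n m \<Phi> X))"

definition cptp :: "nat \<Rightarrow> nat \<Rightarrow> (complex mat \<Rightarrow> complex mat) \<Rightarrow> bool" where
  "cptp n m \<Phi> \<longleftrightarrow> lin_map n m \<Phi> \<and> completely_positive n m \<Phi> \<and> trace_preserving n \<Phi>"

definition semi_nonnegative :: "nat \<Rightarrow> nat \<Rightarrow> (complex mat \<Rightarrow> complex mat) \<Rightarrow> bool" where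
  "semi_nonnegative n m \<Psi> \<longleftrightarrow> (\<exists>\<rho>. density n \<rho> \<and> density m (\<Psi> \<rho>))"

end

theory Submission
  imports Defs
begin

lemma sum_split_mult: "(\<Sum>p<k*m. g p) = (\<Sum>i<(k::nat). \<Sum>a<m. (g (i*m+a) :: 'a::comm_monoid_add))"
proof (induction k)
  case 0 then show ?case by simp
next
  case (Suc k)
  have "(\<Sum>p<Suc k*m. g p) = (\<Sum>p<k*m. g p) + (\<Sum>p\<in>{k*m..<k*m+m}. g p)"
    by (simp add: lessThan_atLeast0 sum.atLeastLessThan_concat add.commute)
  also have "(\<Sum>p\<in>{k*m..<k*m+m}. g p) = (\<Sum>a<m. g (k*m+a))"
    using sum.shift_bounds_nat_ivl[of g 0 "k*m" m] by (simp add: lessThan_atLeast0 add.commute)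
  finally show ?case using Suc by simp
qed

definition qf :: "nat \<Rightarrow> (nat \<Rightarrow> nat \<Rightarrow> complex) \<Rightarrow> (nat \<Rightarrow> complex) \<Rightarrow> complex" where
  "qf d A v = (\<Sum>a<d. \<Sum>b<d. cnj (v a) * A a b * v b)"

definition psdf :: "nat \<Rightarrow> (nat \<Rightarrow> nat \<Rightarrow> complex) \<Rightarrow> bool" where
  "psdf d A \<longleftrightarrow> (\<forall>a<d. \<forall>b<d. A a b = cnj (A b a)) \<and> (\<forall>v. 0 \<le> qf d A v)"

lemma nonneg_iff: "(z \<in> \<real> \<and> Re z \<ge> 0) \<longleftrightarrow> 0 \<le> (z::complex)"
  by (auto simp: less_eq_complex_def complex_is_Real_iff)

lemma qf_vec:
  assumes "M \<in> carrier_mat d d" "v \<in> carrier_vec d"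
  shows "conjugate v \<bullet> (M *\<^sub>v v) = qf d (\<lambda>a b. M $$ (a,b)) (\<lambda>i. v $ i)"
proof -
  have "conjugate v \<bullet> (M *\<^sub>v v) = (\<Sum>a<d. cnj (v$a) * (\<Sum>b<d. M$$(a,b) * v$b))"
    using assms by (auto simp: scalar_prod_def lessThan_atLeast0 intro!: sum.cong)
  then show ?thesis by (simp add: qf_def sum_distrib_left mult.assoc)
qed

lemma madj_index[simp]: "a < dim_col M \<Longrightarrow> b < dim_row M \<Longrightarrow> madj M $$ (a,b) = cnj (M $$ (b,a))"
  unfolding madj_def by simp

lemma madj_dim[simp]: "dim_row (madj M) = dim_col M" "dim_col (madj M) = dim_row M"
  unfolding madj_def by simp_all

lemma madj_iff:
  assumes "M \<in> carrier_mat d d"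
  shows "madj M = M \<longleftrightarrow> (\<forall>a<d. \<forall>b<d. M $$ (a,b) = cnj (M $$ (b,a)))"
proof
  assume e: "madj M = M"
  show "\<forall>a<d. \<forall>b<d. M $$ (a,b) = cnj (M $$ (b,a))"
  proof (intro allI impI)
    fix a b assume "a < d" "b < d"
    then have "madj M $$ (a,b) = cnj (M $$ (b,a))" using assms by simp
    then show "M $$ (a,b) = cnj (M $$ (b,a))" unfolding e .
  qed
next
  assume h: "\<forall>a<d. \<forall>b<d. M $$ (a,b) = cnj (M $$ (b,a))"
  show "madj M = M"
  proof (rule eq_matI)
    fix i j assume "i < dim_row M" "j < dim_col M"
    then have "i < d" "j < d" using assms by auto
    then have hij: "M $$ (i, j) = cnj (M $$ (j, i))" using h by blast
    have "madj M $$ (i, j) = cnj (M $$ (j, i))" using assms \<open>i < dim_row M\<close> \<open>j < dim_col M\<close> by simp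
    also have "\<dots> = M $$ (i, j)" using hij by (rule sym)
    finally show "madj M $$ (i, j) = M $$ (i, j)" .
  qed (use assms in simp_all)
qed

lemma psd_iff: "psd d M \<longleftrightarrow> M \<in> carrier_mat d d \<and> psdf d (\<lambda>a b. M $$ (a,b))"
proof
  assume p: "psd d M"
  then have M: "M \<in> carrier_mat d d" by (simp add: psd_def)
  from p have ad: "madj M = M" by (simp add: psd_def)
  have herm: "\<forall>a<d. \<forall>b<d. M $$ (a,b) = cnj (M $$ (b,a))"
    using ad madj_iff[OF M] by blast
  have pos: "0 \<le> qf d (\<lambda>a b. M $$ (a,b)) v" for v
  proof -
    have "qf d (\<lambda>a b. M $$ (a,b)) v = qf d (\<lambda>a b. M $$ (a,b)) (\<lambda>i. vec d v $ i)"
      unfolding qf_def by simp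
    also have "\<dots> = conjugate (vec d v) \<bullet> (M *\<^sub>v vec d v)"
      using qf_vec[OF M, of "vec d v"] by simp
    finally have e: "qf d (\<lambda>a b. M $$ (a,b)) v = conjugate (vec d v) \<bullet> (M *\<^sub>v vec d v)" .
    have "vec d v \<in> carrier_vec d" by simp
    then have "conjugate (vec d v) \<bullet> (M *\<^sub>v vec d v) \<in> \<real> \<and> Re (conjugate (vec d v) \<bullet> (M *\<^sub>v vec d v)) \<ge> 0"
      using p unfolding psd_def by blast
    then show ?thesis unfolding e nonneg_iff .
  qed
  show "M \<in> carrier_mat d d \<and> psdf d (\<lambda>a b. M $$ (a,b))"
    using M herm pos unfolding psdf_def by blast
next
  assume h: "M \<in> carrier_mat d d \<and> psdf d (\<lambda>a b. M $$ (a,b))"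
  then have M: "M \<in> carrier_mat d d" and herm: "\<forall>a<d. \<forall>b<d. M $$ (a,b) = cnj (M $$ (b,a))"
    and pos: "\<And>v. 0 \<le> qf d (\<lambda>a b. M $$ (a,b)) v" unfolding psdf_def by blast+
  have "madj M = M" using madj_iff[OF M] herm by blast
  moreover have "conjugate v \<bullet> (M *\<^sub>v v) \<in> \<real> \<and> Re (conjugate v \<bullet> (M *\<^sub>v v)) \<ge> 0"
    if "v \<in> carrier_vec d" for v
    unfolding qf_vec[OF M that] nonneg_iff by (rule pos)
  ultimately show "psd d M" unfolding psd_def using M by blast
qed


lemma qf_shift:
  assumes "p < d"
  shows "qf d A (\<lambda>i. v i + (if i = p then t else 0)) =
    qf d A v + t * (\<Sum>a<d. cnj (v a) * A a p) + cnj t * (\<Sum>b<d. A p b * v b) + cnj t * t * A p p"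
proof -
  have pt: "cnj (v a + (if a = p then t else 0)) * A a b * (v b + (if b = p then t else 0)) =
     cnj (v a) * A a b * v b + (if b = p then t * (cnj (v a) * A a p) else 0)
     + (if a = p then cnj t * (A p b * v b) else 0) + (if a = p then (if b = p then cnj t * t * A p p else 0) else 0)"
    for a b by (auto simp: algebra_simps)
  have "qf d A (\<lambda>i. v i + (if i = p then t else 0)) =
     (\<Sum>a<d. (\<Sum>b<d. cnj (v a) * A a b * v b) + t * (cnj (v a) * A a p)
        + (if a = p then cnj t * (\<Sum>b<d. A p b * v b) else 0)
        + (if a = p then cnj t * t * A p p else 0))"
    unfolding qf_def pt using assms
    by (intro sum.cong refl) (simp add: sum.distrib sum_distrib_left)
  also have "\<dots> = qf d A v + t * (\<Sum>a<d. cnj (v a) * A a p) + cnj t * (\<Sum>b<d. A p b * v b) + cnj t * t * A p p"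
    using assms by (simp add: sum.distrib sum_distrib_left qf_def)
  finally show ?thesis .
qed

lemma psdf_herm: "psdf d A \<Longrightarrow> a < d \<Longrightarrow> b < d \<Longrightarrow> A a b = cnj (A b a)"
  unfolding psdf_def by blast

lemma psdf_pos: "psdf d A \<Longrightarrow> 0 \<le> qf d A v"
  unfolding psdf_def by blast

lemma qf_unit:
  assumes "q < d"
  shows "qf d A (\<lambda>i. if i = q then 1 else 0) = A q q"
proof -
  have "qf d A (\<lambda>i. if i = q then 1 else 0) = (\<Sum>a<d. if a = q then A q q else 0)"
    unfolding qf_def using assms by (intro sum.cong refl) (simp add: if_distrib cong: if_cong)
  also have "\<dots> = A q q" using assms by simp
  finally show ?thesis .
qed

lemma psdf_diag: "psdf d A \<Longrightarrow> q < d \<Longrightarrow> 0 \<le> A q q"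
  using psdf_pos[of d A "\<lambda>i. if i = q then 1 else 0"] qf_unit[of q d A] by simp

lemma psdf_zero:
  assumes A: "psdf d A" and p: "p < d" and q: "q < d" and z: "A p p = 0"
  shows "A p q = 0"
proof (rule ccontr)
  assume c0: "A p q \<noteq> 0"
  then have qp: "q \<noteq> p" using z by auto
  define c where "c = A p q"
  have c0': "cnj c \<noteq> 0" using c0 c_def by simp
  have hqp: "A q p = cnj c" using psdf_herm[OF A q p] c_def by simp
  have hqq: "cnj (A q q) = A q q" using psdf_herm[OF A q q] by simp
  define x where "x = - (A q q + 1) / cnj c"
  let ?v = "\<lambda>i. if i = q then (1::complex) else 0"
  have "(\<Sum>a<d. cnj (?v a) * A a p) = (\<Sum>a<d. if a = q then A a p else 0)"
    by (intro sum.cong refl) simp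
  then have s1: "(\<Sum>a<d. cnj (?v a) * A a p) = cnj c"
    using q hqp by simp
  have s2: "(\<Sum>b<d. A p b * ?v b) = c"
    using q c_def by (simp add: if_distrib cong: if_cong)
  have "qf d A (\<lambda>i. ?v i + (if i = p then x else 0)) = A q q + x * cnj c + cnj x * c"
    using qf_shift[OF p, of A ?v x] qf_unit[OF q, of A] s1 s2 z by simp
  also have "x * cnj c = - (A q q + 1)" using c0' x_def by simp
  also have "cnj x * c = - (A q q + 1)"
  proof -
    have "cnj x = - (A q q + 1) / c" unfolding x_def using hqq by simp
    then show ?thesis using c0 c_def by simp
  qed
  finally have e: "qf d A (\<lambda>i. ?v i + (if i = p then x else 0)) = - A q q - 2" by simp
  have "0 \<le> qf d A (\<lambda>i. ?v i + (if i = p then x else 0))" by (rule psdf_pos[OF A])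
  moreover have "0 \<le> A q q" by (rule psdf_diag[OF A q])
  ultimately show False unfolding e by (simp add: less_eq_complex_def)
qed


lemma psdf_schur:
  assumes A: "psdf d A" and p: "p < d" and r: "A p p = complex_of_real r" and r0: "r \<noteq> 0"
  shows "psdf d (\<lambda>a b. A a b - A a p * cnj (A b p) / A p p)"
proof -
  let ?A' = "\<lambda>a b. A a b - A a p * cnj (A b p) / A p p"
  have herm: "?A' a b = cnj (?A' b a)" if "a < d" "b < d" for a b
  proof -
    have "cnj (?A' b a) = cnj (A b a) - cnj (A b p) * A a p / A p p"
      using r by simp
    also have "cnj (A b a) = A a b" using psdf_herm[OF A that] by simp
    finally show ?thesis by simp
  qed
  have pos: "0 \<le> qf d ?A' v" for v
  proof -
    define s where "s = (\<Sum>b<d. A p b * v b)"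
    have cs: "(\<Sum>a<d. cnj (v a) * A a p) = cnj s"
      unfolding s_def by (simp add: psdf_herm[OF A _ p] mult.commute)
    have cs2: "(\<Sum>b<d. cnj (A b p) * v b) = s"
      unfolding s_def by (intro sum.cong refl) (simp add: psdf_herm[OF A p])
    have "qf d ?A' v = (\<Sum>a<d. \<Sum>b<d. cnj (v a) * A a b * v b - (cnj (v a) * A a p) * (cnj (A b p) * v b) / A p p)"
      unfolding qf_def by (intro sum.cong refl) (simp add: algebra_simps)
    also have "\<dots> = qf d A v - (\<Sum>a<d. cnj (v a) * A a p) * (\<Sum>b<d. cnj (A b p) * v b) / A p p"
      by (simp add: qf_def sum_subtractf sum_distrib_left sum_distrib_right sum_divide_distrib) (rule sum.swap)
    also have "\<dots> = qf d A v - cnj s * s / A p p" unfolding cs cs2 ..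
    finally have e1: "qf d ?A' v = qf d A v - cnj s * s / A p p" .
    define t where "t = - s / A p p"
    have "qf d A (\<lambda>i. v i + (if i = p then t else 0)) = qf d A v + t * cnj s + cnj t * s + cnj t * t * A p p"
      using qf_shift[OF p, of A v t] cs s_def by simp
    also have "\<dots> = qf d A v - cnj s * s / A p p"
      unfolding t_def r using r0 by (simp add: field_simps)
    finally have e2: "qf d A (\<lambda>i. v i + (if i = p then t else 0)) = qf d ?A' v" using e1 by simp
    show ?thesis unfolding e2[symmetric] by (rule psdf_pos[OF A])
  qed
  show ?thesis unfolding psdf_def using herm pos by blast
qed

lemma psdf_decomp_aux:
  "\<forall>A. psdf d A \<longrightarrow> (\<forall>a<d. \<forall>b<d. (r \<le> a \<or> r \<le> b) \<longrightarrow> A a b = 0) \<longrightarrow>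
     (\<exists>(N::nat) f. \<forall>a<d. \<forall>b<d. A a b = (\<Sum>l<N. f l a * cnj (f l b)))"
proof (induction r)
  case 0
  show ?case
  proof (intro allI impI)
    fix A :: "nat \<Rightarrow> nat \<Rightarrow> complex" assume "\<forall>a<d. \<forall>b<d. (0 \<le> a \<or> 0 \<le> b) \<longrightarrow> A a b = 0"
    then have h: "\<forall>a<d. \<forall>b<d. A a b = 0" by simp
    show "\<exists>(N::nat) f. \<forall>a<d. \<forall>b<d. A a b = (\<Sum>l<N. f l a * cnj (f l b))"
      by (rule exI[where x="0::nat"]) (simp add: h)
  qed
next
  case (Suc r)
  show ?case
  proof (intro allI impI)
    fix A :: "nat \<Rightarrow> nat \<Rightarrow> complex" assume A: "psdf d A" and supp: "\<forall>a<d. \<forall>b<d. (Suc r \<le> a \<or> Suc r \<le> b) \<longrightarrow> A a b = 0"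
    show "\<exists>(N::nat) f. \<forall>a<d. \<forall>b<d. A a b = (\<Sum>l<N. f l a * cnj (f l b))"
    proof (cases "r < d")
      case False
      then have "\<forall>a<d. \<forall>b<d. (r \<le> a \<or> r \<le> b) \<longrightarrow> A a b = 0" by auto
      then show ?thesis using Suc.IH A by blast
    next
      case rd: True
      show ?thesis
      proof (cases "A r r = 0")
        case True
        have z1: "A r b = 0" if "b < d" for b using psdf_zero[OF A rd that True] .
        have z2: "A b r = 0" if "b < d" for b using psdf_herm[OF A that rd] z1[OF that] by simp
        have "\<forall>a<d. \<forall>b<d. (r \<le> a \<or> r \<le> b) \<longrightarrow> A a b = 0"
        proof (intro allI impI)
          fix a b assume ab: "a < d" "b < d" "r \<le> a \<or> r \<le> b"
          show "A a b = 0"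
          proof (cases "a = r \<or> b = r")
            case True then show ?thesis using z1 z2 ab by auto
          next
            case False then show ?thesis using supp ab by auto
          qed
        qed
        then show ?thesis using Suc.IH A by blast
      next
        case False
        define rr where "rr = Re (A r r)"
        have "0 \<le> A r r" by (rule psdf_diag[OF A rd])
        then have arr: "A r r = complex_of_real rr" and rr0: "rr \<ge> 0"
          unfolding rr_def by (auto simp: less_eq_complex_def complex_eq_iff)
        with False have rrpos: "rr > 0" by auto
        let ?A' = "\<lambda>a b. A a b - A a r * cnj (A b r) / A r r"
        have A': "psdf d ?A'" by (rule psdf_schur[OF A rd arr]) (use rrpos in simp)
        have hrr: "cnj (A r r) = A r r" using arr by simp
        have supp': "\<forall>a<d. \<forall>b<d. (r \<le> a \<or> r \<le> b) \<longrightarrow> ?A' a b = 0"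
        proof (intro allI impI)
          fix a b assume ab: "a < d" "b < d" "r \<le> a \<or> r \<le> b"
          show "?A' a b = 0"
          proof (cases "a = r")
            case True
            then show ?thesis using psdf_herm[OF A rd ab(2)] False by simp
          next
            case anr: False
            show ?thesis
            proof (cases "b = r")
              case True
              then show ?thesis using hrr False by simp
            next
              case bnr: False
              then have "Suc r \<le> a \<or> Suc r \<le> b" using ab anr by auto
              then have "A a b = 0" "A a r = 0 \<or> A b r = 0" using supp ab rd by auto
              then show ?thesis by auto
            qed
          qed
        qed
        obtain N :: nat and f where Nf: "\<forall>a<d. \<forall>b<d. ?A' a b = (\<Sum>l<N. f l a * cnj (f l b))"
          using mp[OF mp[OF spec[OF Suc.IH, of ?A'] A'] supp'] by blast
        define g where "g = f(N := (\<lambda>a. A a r / complex_of_real (sqrt rr)))"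
        have "A a b = (\<Sum>l<Suc N. g l a * cnj (g l b))" if "a < d" "b < d" for a b
        proof -
          have "(\<Sum>l<Suc N. g l a * cnj (g l b)) = (\<Sum>l<N. f l a * cnj (f l b)) + A a r * cnj (A b r) / A r r"
          proof -
            have "(\<Sum>l<N. g l a * cnj (g l b)) = (\<Sum>l<N. f l a * cnj (f l b))"
              unfolding g_def by (intro sum.cong refl) simp
            moreover have "g N a * cnj (g N b) = A a r * cnj (A b r) / A r r"
            proof -
              have sq: "(complex_of_real (sqrt rr))^2 = complex_of_real rr"
                using rrpos by (simp flip: of_real_power)
              show ?thesis unfolding g_def arr using rrpos sq
                by (simp add: field_simps power2_eq_square[symmetric])
            qed
            ultimately show ?thesis by simp
          qed
          also have "\<dots> = A a b"
          proof -
            have "A a b - A a r * cnj (A b r) / A r r = (\<Sum>l<N. f l a * cnj (f l b))" using Nf that by blast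
            then show ?thesis by (simp add: algebra_simps)
          qed
          finally show ?thesis by simp
        qed
        then show ?thesis by (intro exI[of _ "Suc N"] exI[of _ g] allI impI)
      qed
    qed
  qed
qed

lemma psdf_decomp:
  assumes "psdf d A"
  shows "\<exists>(N::nat) f. \<forall>a<d. \<forall>b<d. A a b = (\<Sum>l<N. f l a * cnj (f l b))"
  using psdf_decomp_aux[of d d] assms by auto


lemma idx_less: "i < k \<Longrightarrow> c < n \<Longrightarrow> i * n + c < k * (n::nat)"
proof -
  assume "i < k" "c < n"
  then have "i * n + c < i * n + n" by simp
  also have "\<dots> = Suc i * n" by simp
  also have "\<dots> \<le> k * n" using \<open>i < k\<close> by (intro mult_le_mono1) simp
  finally show ?thesis .
qed

lemma qf_split:
  "qf (k*m) A v = (\<Sum>i<k. \<Sum>a<m. \<Sum>j<k. \<Sum>b<m. cnj (v (i*m+a)) * A (i*m+a) (j*m+b) * v (j*m+b))"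
  unfolding qf_def by (simp add: sum_split_mult)

lemma qf_slice:
  assumes c: "c < n"
  shows "qf (k*n) Y (\<lambda>p. if p mod n = c then w (p div n) else 0) =
    (\<Sum>i<k. \<Sum>j<k. cnj (w i) * Y (i*n+c) (j*n+c) * w j)"
proof -
  have n0: "0 < n" using c by simp
  let ?z = "\<lambda>p. if p mod n = c then w (p div n) else 0"
  let ?X = "\<lambda>i j. cnj (w i) * Y (i*n+c) (j*n+c) * w j"
  have inner: "(\<Sum>j<k. \<Sum>b<n. cnj (?z (i*n+a)) * Y (i*n+a) (j*n+b) * ?z (j*n+b)) =
      (if a = c then (\<Sum>j<k. ?X i j) else 0)" if a: "a < n" for i a
  proof (cases "a = c")
    case True
    have "(\<Sum>j<k. \<Sum>b<n. cnj (?z (i*n+a)) * Y (i*n+a) (j*n+b) * ?z (j*n+b)) =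
       (\<Sum>j<k. \<Sum>b<n. if b = c then ?X i j else 0)"
      using True a by (intro sum.cong refl) simp
    also have "\<dots> = (\<Sum>j<k. ?X i j)" using c by simp
    finally show ?thesis using True by simp
  next
    case False
    then show ?thesis using a by simp
  qed
  have "qf (k*n) Y ?z = (\<Sum>i<k. \<Sum>a<n. (if a = c then (\<Sum>j<k. ?X i j) else 0))"
    unfolding qf_split using inner by (intro sum.cong refl) simp
  also have "\<dots> = (\<Sum>i<k. \<Sum>j<k. ?X i j)"
    using c by simp
  finally show ?thesis .
qed


lemma kron_psdf:
  assumes Y: "psdf (k*n) Y" and S: "psdf m S"
  shows "psdf (k*m) (\<lambda>p q. (\<Sum>c<n. Y ((p div m)*n + c) ((q div m)*n + c)) * S (p mod m) (q mod m))"
proof -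
  define T where "T i j = (\<Sum>c<n. Y (i*n + c) (j*n + c))" for i j
  let ?M = "\<lambda>p q. (\<Sum>c<n. Y ((p div m)*n + c) ((q div m)*n + c)) * S (p mod m) (q mod m)"
  have Mdef: "?M p q = T (p div m) (q div m) * S (p mod m) (q mod m)" for p q
    unfolding T_def ..
  have Therm: "T i j = cnj (T j i)" if "i < k" "j < k" for i j
    unfolding T_def cnj_sum
    by (intro sum.cong refl psdf_herm[OF Y] idx_less) (use that in auto)
  have herm: "?M p q = cnj (?M q p)" if "p < k*m" "q < k*m" for p q
  proof -
    have m0: "0 < m" using that by (cases m) auto
    have "p div m < k" "q div m < k" using that by (simp_all add: less_mult_imp_div_less)
    moreover have "p mod m < m" "q mod m < m" using m0 by simp_all
    ultimately have h1: "(\<Sum>c<n. Y ((p div m)*n + c) ((q div m)*n + c)) = cnj (\<Sum>c<n. Y ((q div m)*n + c) ((p div m)*n + c))"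
      and h2: "S (p mod m) (q mod m) = cnj (S (q mod m) (p mod m))"
      using Therm[unfolded T_def] psdf_herm[OF S] by blast+
    show ?thesis unfolding h1 h2 by simp
  qed
  obtain N :: nat and f where Sdec: "\<forall>a<m. \<forall>b<m. S a b = (\<Sum>l<N. f l a * cnj (f l b))"
    using psdf_decomp[OF S] by blast
  have pos: "0 \<le> qf (k*m) ?M v" for v
  proof -
    define V where "V i a = v (i*m+a)" for i a
    define w where "w l i = (\<Sum>b<m. cnj (f l b) * V i b)" for l i
    have "qf (k*m) ?M v = (\<Sum>i<k. \<Sum>a<m. \<Sum>j<k. \<Sum>b<m. cnj (V i a) * (T i j * S a b) * V j b)"
      unfolding qf_split Mdef V_def by (intro sum.cong refl) simp
    also have "\<dots> = (\<Sum>i<k. \<Sum>j<k. \<Sum>a<m. \<Sum>b<m. cnj (V i a) * (T i j * S a b) * V j b)"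
      by (rule sum.cong[OF refl], rule sum.swap)
    also have "\<dots> = (\<Sum>i<k. \<Sum>j<k. \<Sum>a<m. \<Sum>b<m. cnj (V i a) * (T i j * (\<Sum>l<N. f l a * cnj (f l b))) * V j b)"
      using Sdec by (intro sum.cong refl) simp
    also have "\<dots> = (\<Sum>l<N. \<Sum>c<n. \<Sum>i<k. \<Sum>j<k. cnj (w l i) * Y (i*n+c) (j*n+c) * w l j)"
      unfolding T_def w_def
      apply (simp only: sum_distrib_left sum_distrib_right cnj_sum)
      apply (simp only: sum.swap[where B="{..<n}"])
      apply (simp only: sum.swap[where B="{..<N}"])
      apply (rule sum.cong[OF refl], rule sum.cong[OF refl], rule sum.cong[OF refl], rule sum.cong[OF refl])
      apply (subst sum.swap)
      apply (simp add: mult_ac)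
      done
    also have "\<dots> = (\<Sum>l<N. \<Sum>c<n. qf (k*n) Y (\<lambda>p. if p mod n = c then w l (p div n) else 0))"
      by (intro sum.cong refl) (simp add: qf_slice)
    finally have e: "qf (k*m) ?M v = (\<Sum>l<N. \<Sum>c<n. qf (k*n) Y (\<lambda>p. if p mod n = c then w l (p div n) else 0))" .
    show ?thesis unfolding e
      by (intro sum_nonneg psdf_pos[OF Y])
  qed
  show ?thesis unfolding psdf_def using herm pos by blast
qed


lemma psdf_cong:
  assumes ab: "\<And>a b. a < d \<Longrightarrow> b < d \<Longrightarrow> A a b = B a b"
  shows "psdf d A \<Longrightarrow> psdf d B"
proof -
  assume pA: "psdf d A"
  have "qf d A v = qf d B v" for v unfolding qf_def using ab by simp
  then have pos: "\<forall>v. 0 \<le> qf d B v" using psdf_pos[OF pA] by metis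
  have herm: "B a b = cnj (B b a)" if "a < d" "b < d" for a b
  proof -
    have "A a b = cnj (A b a)" using psdf_herm[OF pA that] .
    then show ?thesis using ab[OF that(1,2)] ab[OF that(2,1)] by simp
  qed
  show "psdf d B" unfolding psdf_def using herm pos by blast
qed

lemma mtrace_add: "A \<in> carrier_mat n n \<Longrightarrow> B \<in> carrier_mat n n \<Longrightarrow> mtrace (A + B) = mtrace A + mtrace B"
  unfolding mtrace_def by (simp add: sum.distrib)

lemma mtrace_smult: "A \<in> carrier_mat n n \<Longrightarrow> mtrace (c \<cdot>\<^sub>m A) = c * mtrace A"
  unfolding mtrace_def by (simp add: sum_distrib_left)

lemma smult_smult_mat: "a \<cdot>\<^sub>m (b \<cdot>\<^sub>m A) = (a * b) \<cdot>\<^sub>m (A :: complex mat)"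
  by (rule eq_matI) auto

definition repl :: "complex mat \<Rightarrow> complex mat \<Rightarrow> complex mat" where
  "repl \<sigma> X = mtrace X \<cdot>\<^sub>m \<sigma>"

lemma repl_cp:
  assumes s: "psd m \<sigma>"
  shows "completely_positive n m (repl \<sigma>)"
  unfolding completely_positive_def
proof (intro allI impI)
  fix k X assume X: "psd (k * n) X"
  then have Xc: "X \<in> carrier_mat (k*n) (k*n)" and Xp: "psdf (k*n) (\<lambda>a b. X $$ (a,b))"
    by (simp_all add: psd_iff)
  from s have sc: "\<sigma> \<in> carrier_mat m m" and sp: "psdf m (\<lambda>a b. \<sigma> $$ (a,b))"
    by (simp_all add: psd_iff)
  have K: "psdf (k*m) (\<lambda>p q. (\<Sum>c<n. X $$ ((p div m)*n + c, (q div m)*n + c)) * \<sigma> $$ (p mod m, q mod m))"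
    by (rule kron_psdf[OF Xp sp])
  have ent: "ampl k n m (repl \<sigma>) X $$ (p, q) =
      (\<Sum>c<n. X $$ ((p div m)*n + c, (q div m)*n + c)) * \<sigma> $$ (p mod m, q mod m)"
    if "p < k*m" "q < k*m" for p q
  proof -
    have m0: "0 < m" using that by (cases m) auto
    then have "p mod m < m" "q mod m < m" by simp_all
    then show ?thesis using that sc
      unfolding ampl_def repl_def mtrace_def by simp
  qed
  have "psdf (k*m) (\<lambda>p q. ampl k n m (repl \<sigma>) X $$ (p, q))"
    using psdf_cong[of "k*m" _ "\<lambda>p q. ampl k n m (repl \<sigma>) X $$ (p, q)", OF ent[symmetric] K] by blast
  moreover have "ampl k n m (repl \<sigma>) X \<in> carrier_mat (k*m) (k*m)"
    unfolding ampl_def by simp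
  ultimately show "psd (k * m) (ampl k n m (repl \<sigma>) X)" by (simp add: psd_iff)
qed

lemma repl_cptp:
  assumes s: "density m \<sigma>"
  shows "cptp n m (repl \<sigma>)"
proof -
  from s have sc: "\<sigma> \<in> carrier_mat m m" and ps: "psd m \<sigma>" and tr: "mtrace \<sigma> = 1"
    by (auto simp: density_def psd_def)
  have "lin_map n m (repl \<sigma>)"
    unfolding lin_map_def repl_def
    using sc by (auto simp: mtrace_add mtrace_smult add_smult_distrib_right_mat smult_smult_mat)
  moreover have "trace_preserving n (repl \<sigma>)"
    unfolding trace_preserving_def repl_def using sc by (simp add: mtrace_smult tr)
  ultimately show ?thesis unfolding cptp_def using repl_cp[OF ps] by blast
qed

lemma ampl_1:
  assumes "lin_map n m \<Phi>" "X \<in> carrier_mat n n"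
  shows "ampl 1 n m \<Phi> X = \<Phi> X"
proof -
  have Xe: "mat n n (\<lambda>(a, b). X $$ (0 * n + a, 0 * n + b)) = X"
    by (rule eq_matI) (use assms(2) in auto)
  have c: "\<Phi> X \<in> carrier_mat m m" using assms unfolding lin_map_def by blast
  show ?thesis
  proof (rule eq_matI)
    fix i j assume "i < dim_row (\<Phi> X)" "j < dim_col (\<Phi> X)"
    then have "i < m" "j < m" using c by auto
    then show "ampl 1 n m \<Phi> X $$ (i, j) = \<Phi> X $$ (i, j)"
      unfolding ampl_def using Xe by simp
  qed (use c in \<open>auto simp: ampl_def\<close>)
qed

lemma cptp_density:
  assumes "cptp n m \<Phi>" "density n \<rho>"
  shows "density m (\<Phi> \<rho>)"
proof -
  have lm: "lin_map n m \<Phi>" and cp: "completely_positive n m \<Phi>" and tp: "trace_preserving n \<Phi>"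
    using assms(1) unfolding cptp_def by auto
  have p: "psd n \<rho>" and t: "mtrace \<rho> = 1" using assms(2) unfolding density_def by auto
  then have rc: "\<rho> \<in> carrier_mat n n" unfolding psd_def by auto
  have "psd (1*n) \<rho>" using p by simp
  then have "psd (1*m) (ampl 1 n m \<Phi> \<rho>)" using cp unfolding completely_positive_def by blast
  then have "psd m (\<Phi> \<rho>)" using ampl_1[OF lm rc] by simp
  moreover have "mtrace (\<Phi> \<rho>) = 1" using tp rc t unfolding trace_preserving_def by simp
  ultimately show ?thesis unfolding density_def by blast
qed

lemma e00_density:
  assumes "0 < n"
  shows "density n (mat n n (\<lambda>(i, j). if i = 0 \<and> j = 0 then 1 else 0))"
proof -
  let ?E = "mat n n (\<lambda>(i, j). if i = 0 \<and> j = 0 then (1::complex) else 0)"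
  have q: "qf n (\<lambda>a b. ?E $$ (a,b)) v = cnj (v 0) * v 0" for v
  proof -
    have "qf n (\<lambda>a b. ?E $$ (a,b)) v = (\<Sum>a<n. \<Sum>b<n. if a = 0 then (if b = 0 then cnj (v 0) * v 0 else 0) else 0)"
      unfolding qf_def by (intro sum.cong refl) auto
    also have "\<dots> = (\<Sum>a<n. if a = 0 then cnj (v 0) * v 0 else 0)"
      using assms by (intro sum.cong refl) auto
    also have "\<dots> = cnj (v 0) * v 0" using assms by simp
    finally show ?thesis .
  qed
  have "0 \<le> cnj z * z" for z :: complex
    using conjugate_square_positive[of z] by (simp add: mult.commute)
  then have "psdf n (\<lambda>a b. ?E $$ (a,b))" unfolding psdf_def q by auto
  then have "psd n ?E" by (simp add: psd_iff)
  moreover have "mtrace ?E = 1"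
  proof -
    have "mtrace ?E = (\<Sum>i<n. if i = 0 then 1 else 0)" unfolding mtrace_def
      by (intro sum.cong) auto
    also have "\<dots> = 1" using assms by simp
    finally show ?thesis .
  qed
  ultimately show ?thesis unfolding density_def by blast
qed

theorem theorem2:
  fixes n m :: nat and \<Psi> :: "complex mat \<Rightarrow> complex mat"
  assumes "n > 0"
    and "lin_map n m \<Psi>" and "herm_preserving n \<Psi>" and "trace_preserving n \<Psi>"
  shows "semi_nonnegative n m \<Psi> \<longleftrightarrow>
         (\<exists>\<Phi> \<Xi>. cptp n n \<Phi> \<and> cptp n m \<Xi> \<and> (\<forall>X \<in> carrier_mat n n. \<Psi> (\<Phi> X) = \<Xi> X))"
proof
  assume "semi_nonnegative n m \<Psi>"
  then obtain \<rho> where r: "density n \<rho>" and pr: "density m (\<Psi> \<rho>)"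
    unfolding semi_nonnegative_def by blast
  have rc: "\<rho> \<in> carrier_mat n n" using r unfolding density_def psd_def by blast
  have "\<Psi> (repl \<rho> X) = repl (\<Psi> \<rho>) X" if "X \<in> carrier_mat n n" for X
    unfolding repl_def using assms(2) rc unfolding lin_map_def by blast
  then show "\<exists>\<Phi> \<Xi>. cptp n n \<Phi> \<and> cptp n m \<Xi> \<and> (\<forall>X \<in> carrier_mat n n. \<Psi> (\<Phi> X) = \<Xi> X)"
    using repl_cptp[OF r] repl_cptp[OF pr] by blast
next
  assume "\<exists>\<Phi> \<Xi>. cptp n n \<Phi> \<and> cptp n m \<Xi> \<and> (\<forall>X \<in> carrier_mat n n. \<Psi> (\<Phi> X) = \<Xi> X)"
  then obtain \<Phi> \<Xi> where P: "cptp n n \<Phi>" and X: "cptp n m \<Xi>" and e: "\<forall>X \<in> carrier_mat n n. \<Psi> (\<Phi> X) = \<Xi> X"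
    by blast
  let ?E = "mat n n (\<lambda>(i, j). if i = 0 \<and> j = 0 then (1::complex) else 0)"
  have d: "density n ?E" by (rule e00_density[OF assms(1)])
  have "density n (\<Phi> ?E)" by (rule cptp_density[OF P d])
  moreover have "density m (\<Psi> (\<Phi> ?E))" using e cptp_density[OF X d] by simp
  ultimately show "semi_nonnegative n m \<Psi>" unfolding semi_nonnegative_def by blast
qed

end
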